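(* $\mathrm{1QFA}_{(1/2,1/2)}/Rn=\mathrm{ALL}$.
   Context: $\mathrm{ALL}$ is the collection of all languages. A 1qfa is a one-way measure-many quantum finite automaton (one unitary per scanned symbol, followed at each step by a projection measurement onto accepting/rejecting/non-halting subspaces). For equal-length strings $x,y$, $\genfrac{[}{]}{0pt}{}{x}{y}$ is the two-track string with $x$ on the upper track and $y$ on the lower track. For functions $a,b:\mathbb{N}\to[0,1]$, $\mathrm{1QFA}_{(a(n),b(n))}/Rn$ is the family of languages $L$ over $\Sigma$ for which there exist a 1qfa $M$, an advice alphabet $\Gamma$ and randomized advice $\{D_n\}_{n\in\mathbb{N}}$ ($D_n$ a probability distribution on $\Gamma^n$) such that for every $n$ and $x\in\Sigma^n$: if $x\in L$, then $M$ on $\genfrac{[}{]}{0pt}{}{x}{y}$ with $y\sim D_n$ accepts with probability more than $a(n)$; if $x\notin L$, it rejects with probability more than $b(n)$ (probabilities taken over both $M$ and $D_n$). *)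

theory Defs
  imports "HOL-Probability.Probability"
begin

datatype 'a tsym = LEnd | REnd | Sym 'a

text \<open>A measure-many 1qfa with basis states 0..dim-1, initial basis state q0,
  one (matrix of a) unitary per tape symbol, accepting and rejecting basis states
  (the remaining basis states span the non-halting subspace).\<close>
record 'a qfa =
  dim :: nat
  q0 :: nat
  trans :: "'a tsym \<Rightarrow> nat \<Rightarrow> nat \<Rightarrow> complex"
  accs :: "nat set"
  rejs :: "nat set"

definition unitary_mat :: "nat \<Rightarrow> (nat \<Rightarrow> nat \<Rightarrow> complex) \<Rightarrow> bool" where
  "unitary_mat k U \<longleftrightarrow>
     (\<forall>i<k. \<forall>j<k. (\<Sum>l<k. cnj (U l i) * U l j) = (if i = j then 1 else 0))"

definition wf_qfa :: "'a set \<Rightarrow> 'a qfa \<Rightarrow> bool" where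
  "wf_qfa A M \<longleftrightarrow> q0 M < dim M \<and> accs M \<subseteq> {..<dim M} \<and> rejs M \<subseteq> {..<dim M}
     \<and> accs M \<inter> rejs M = {}
     \<and> unitary_mat (dim M) (trans M LEnd) \<and> unitary_mat (dim M) (trans M REnd)
     \<and> (\<forall>a\<in>A. unitary_mat (dim M) (trans M (Sym a)))"

definition apply_u :: "'a qfa \<Rightarrow> 'a tsym \<Rightarrow> (nat \<Rightarrow> complex) \<Rightarrow> (nat \<Rightarrow> complex)" where
  "apply_u M s \<psi> = (\<lambda>i. if i < dim M then (\<Sum>j<dim M. trans M s i j * \<psi> j) else 0)"

definition proj_non :: "'a qfa \<Rightarrow> (nat \<Rightarrow> complex) \<Rightarrow> (nat \<Rightarrow> complex)" where
  "proj_non M \<psi> = (\<lambda>i. if i < dim M \<and> i \<notin> accs M \<and> i \<notin> rejs M then \<psi> i else 0)"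

text \<open>Probability of accepting / rejecting while reading the remaining tape, starting from
  the (unnormalised) non-halting state vector; after each unitary step the state is measured.\<close>
fun acc_from :: "'a qfa \<Rightarrow> 'a tsym list \<Rightarrow> (nat \<Rightarrow> complex) \<Rightarrow> real" where
  "acc_from M [] \<psi> = 0"
| "acc_from M (s # w) \<psi> =
     (let \<phi> = apply_u M s \<psi> in (\<Sum>q\<in>accs M. (cmod (\<phi> q))\<^sup>2) + acc_from M w (proj_non M \<phi>))"

fun rej_from :: "'a qfa \<Rightarrow> 'a tsym list \<Rightarrow> (nat \<Rightarrow> complex) \<Rightarrow> real" where
  "rej_from M [] \<psi> = 0"
| "rej_from M (s # w) \<psi> =
     (let \<phi> = apply_u M s \<psi> in (\<Sum>q\<in>rejs M. (cmod (\<phi> q))\<^sup>2) + rej_from M w (proj_non M \<phi>))"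

definition init_vec :: "'a qfa \<Rightarrow> nat \<Rightarrow> complex" where
  "init_vec M = (\<lambda>i. if i = q0 M then 1 else 0)"

definition acc_prob :: "'a qfa \<Rightarrow> 'a list \<Rightarrow> real" where
  "acc_prob M w = acc_from M ([LEnd] @ map Sym w @ [REnd]) (init_vec M)"

definition rej_prob :: "'a qfa \<Rightarrow> 'a list \<Rightarrow> real" where
  "rej_prob M w = rej_from M ([LEnd] @ map Sym w @ [REnd]) (init_vec M)"

definition two_track :: "'a list \<Rightarrow> 'g list \<Rightarrow> ('a \<times> 'g) list" where
  "two_track x y = zip x y"

text \<open>L \<in> 1QFA_{(a(n),b(n))}/Rn over alphabet Sigma. The advice alphabet Gamma is
  a finite set of natural-number codes.\<close>
definition in_1QFA_Rn :: "(nat \<Rightarrow> real) \<Rightarrow> (nat \<Rightarrow> real) \<Rightarrow> 'a set \<Rightarrow> 'a list set \<Rightarrow> bool" where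
  "in_1QFA_Rn a b \<Sigma> L \<longleftrightarrow>
    (\<exists>(M :: ('a \<times> nat) qfa) (\<Gamma> :: nat set) (D :: nat \<Rightarrow> nat list pmf).
       finite \<Gamma> \<and> \<Gamma> \<noteq> {} \<and> wf_qfa (\<Sigma> \<times> \<Gamma>) M \<and>
       (\<forall>n. set_pmf (D n) \<subseteq> {y. length y = n \<and> set y \<subseteq> \<Gamma>}) \<and>
       (\<forall>n. \<forall>x. x \<in> lists \<Sigma> \<and> length x = n \<longrightarrow>
          (x \<in> L \<longrightarrow> measure_pmf.expectation (D n) (\<lambda>y. acc_prob M (two_track x y)) > a n) \<and>
          (x \<notin> L \<longrightarrow> measure_pmf.expectation (D n) (\<lambda>y. rej_prob M (two_track x y)) > b n)))"

end

theory Submission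
  imports Defs
begin

definition sq :: complex where "sq = complex_of_real (sqrt (1/2))"

lemma sq_sq[simp]: "cnj sq * sq = 1/2" "sq * sq = 1/2" "(cmod sq)\<^sup>2 = 1/2"
  "cnj sq = sq"
  unfolding sq_def
  by (auto simp: power2_eq_square of_real_mult[symmetric] simp del: of_real_mult)

definition idm :: "nat \<Rightarrow> nat \<Rightarrow> complex" where
  "idm i j = (if i = j then 1 else 0)"
definition swm :: "nat \<Rightarrow> nat \<Rightarrow> complex" where
  "swm i j = (if (i=0\<and>j=3) \<or> (i=3\<and>j=0) \<or> (i=j \<and> i\<noteq>0 \<and> i\<noteq>3) then 1 else 0)"
definition rendm :: "nat \<Rightarrow> nat \<Rightarrow> complex" where
  "rendm i j = (if (i=2\<and>j=0) \<or> (i=1\<and>j=3) \<or> (i=0\<and>j=1) \<or> (i=3\<and>j=2) then 1 else 0)"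
definition mism :: "nat \<Rightarrow> nat \<Rightarrow> complex" where
  "mism i j = (if i=0 \<and> j=1 then 1 else if i=3 \<and> j=2 then 1
     else if i=1 \<and> (j=0 \<or> j=3) then sq else if i=2 \<and> j=0 then sq
     else if i=2 \<and> j=3 then -sq else 0)"

lemma lt4: "{..<4::nat} = {0,1,2,3}" by auto

lemma u_idm: "unitary_mat 4 idm"
  unfolding unitary_mat_def idm_def lt4 by auto
lemma u_swm: "unitary_mat 4 swm"
  unfolding unitary_mat_def swm_def lt4 by auto
lemma u_rendm: "unitary_mat 4 rendm"
  unfolding unitary_mat_def rendm_def lt4 by auto
lemma u_mism: "unitary_mat 4 mism"
  unfolding unitary_mat_def mism_def lt4 by auto

definition mtr :: "(nat \<Rightarrow> 'a) \<Rightarrow> ('a \<times> nat) tsym \<Rightarrow> nat \<Rightarrow> nat \<Rightarrow> complex" where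
  "mtr h s = (case s of LEnd \<Rightarrow> idm | REnd \<Rightarrow> rendm
      | Sym (a,g) \<Rightarrow> if h (g div 2) = a then (if odd g then swm else idm) else mism)"

definition MM :: "(nat \<Rightarrow> 'a) \<Rightarrow> bool \<Rightarrow> ('a \<times> nat) qfa" where
  "MM h b = \<lparr>dim = 4, q0 = (if b then 3 else 0), trans = mtr h, accs = {1}, rejs = {2}\<rparr>"

lemma MM_simps[simp]: "qfa.trans (MM h b) s i j = mtr h s i j" "dim (MM h b) = 4" "accs (MM h b) = {1}"
  "rejs (MM h b) = {2}" "q0 (MM h b) = (if b then 3 else 0)"
  by (auto simp: MM_def)

definition ev :: "nat \<Rightarrow> nat \<Rightarrow> complex" where "ev i = (\<lambda>j. if j = i then 1 else 0)"

lemma apply_ev: "i < dim M \<Longrightarrow> apply_u M s (ev i) = (\<lambda>k. if k < dim M then qfa.trans M s k i else 0)"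
  unfolding apply_u_def ev_def
  by (auto simp: if_distrib cong: if_cong)

lemma apply_MM: "i < 4 \<Longrightarrow> apply_u (MM h b) s (ev i) = (\<lambda>k. if k < 4 then mtr h s k i else 0)"
  apply (subst apply_ev)
   apply simp
  apply (subst MM_simps(1))
  apply simp
  done

lemma apply_zero: "apply_u M s (\<lambda>_. 0) = (\<lambda>_. 0)"
  unfolding apply_u_def by auto

lemma proj_zero: "proj_non M (\<lambda>_. 0) = (\<lambda>_. 0)"
  unfolding proj_non_def by auto

lemma acc_zero: "acc_from M w (\<lambda>_. 0) = 0"
  by (induction w) (auto simp: apply_zero proj_zero)
lemma rej_zero: "rej_from M w (\<lambda>_. 0) = 0"
  by (induction w) (auto simp: apply_zero proj_zero)

lemma ev03: "i \<in> {0,3} \<Longrightarrow> (\<lambda>k. if k < 4 then idm k i else 0) = ev i"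
  "i \<in> {0,3} \<Longrightarrow> (\<lambda>k. if k < 4 then swm k i else 0) = ev (3 - i)"
  by (auto simp: idm_def swm_def ev_def)

lemma proj_ev: "i \<in> {0,3} \<Longrightarrow> proj_non (MM h b) (ev i) = ev i"
  unfolding proj_non_def ev_def MM_def by auto

lemma step_L:
  assumes "i \<in> {0,3}"
  shows "acc_from (MM h b) (LEnd # w) (ev i) = acc_from (MM h b) w (ev i)"
    "rej_from (MM h b) (LEnd # w) (ev i) = rej_from (MM h b) w (ev i)"
proof -
  have "apply_u (MM h b) LEnd (ev i) = ev i"
    using assms by (subst apply_MM) (auto simp: mtr_def fun_eq_iff idm_def swm_def ev_def)
  then show "acc_from (MM h b) (LEnd # w) (ev i) = acc_from (MM h b) w (ev i)"
    "rej_from (MM h b) (LEnd # w) (ev i) = rej_from (MM h b) w (ev i)"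
    using assms by (auto simp: proj_ev Let_def) (auto simp: MM_def ev_def)
qed

lemma step_match:
  assumes "i \<in> {0,3}" "h (g div 2) = a"
  shows "acc_from (MM h b) (Sym (a,g) # w) (ev i) = acc_from (MM h b) w (ev (if odd g then 3 - i else i))"
    "rej_from (MM h b) (Sym (a,g) # w) (ev i) = rej_from (MM h b) w (ev (if odd g then 3 - i else i))"
proof -
  have i': "(if odd g then 3 - i else i) \<in> {0,3}" using assms by auto
  have "apply_u (MM h b) (Sym (a,g)) (ev i) = ev (if odd g then 3 - i else i)"
    using assms by (subst apply_MM) (auto simp: mtr_def fun_eq_iff idm_def swm_def ev_def)
  then show "acc_from (MM h b) (Sym (a,g) # w) (ev i) = acc_from (MM h b) w (ev (if odd g then 3 - i else i))"
    "rej_from (MM h b) (Sym (a,g) # w) (ev i) = rej_from (MM h b) w (ev (if odd g then 3 - i else i))"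
    using i' by (auto simp: proj_ev Let_def) (auto simp: MM_def ev_def)
qed

lemma step_mis:
  assumes "i \<in> {0,3}" "h (g div 2) \<noteq> a"
  shows "acc_from (MM h b) (Sym (a,g) # w) (ev i) = 1/2"
    "rej_from (MM h b) (Sym (a,g) # w) (ev i) = 1/2"
proof -
  have A: "apply_u (MM h b) (Sym (a,g)) (ev i) = (\<lambda>k. if k < 4 then mism k i else 0)"
    using assms by (subst apply_MM) (auto simp: MM_def mtr_def)
  have P: "proj_non (MM h b) (\<lambda>k. if k < 4 then mism k i else 0) = (\<lambda>_. 0)"
    using assms unfolding proj_non_def by (auto simp: MM_def mism_def)
  show "acc_from (MM h b) (Sym (a,g) # w) (ev i) = 1/2"
    "rej_from (MM h b) (Sym (a,g) # w) (ev i) = 1/2"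
    using assms by (auto simp: A P Let_def acc_zero rej_zero) (auto simp: MM_def mism_def)
qed

lemma step_R:
  assumes "i \<in> {0,3}"
  shows "acc_from (MM h b) [REnd] (ev i) = (if i = 3 then 1 else 0)"
    "rej_from (MM h b) [REnd] (ev i) = (if i = 0 then 1 else 0)"
proof -
  have A: "apply_u (MM h b) REnd (ev i) = (\<lambda>k. if k < 4 then rendm k i else 0)"
    using assms by (subst apply_MM) (auto simp: MM_def mtr_def)
  show "acc_from (MM h b) [REnd] (ev i) = (if i = 3 then 1 else 0)"
    "rej_from (MM h b) [REnd] (ev i) = (if i = 0 then 1 else 0)"
    using assms by (auto simp: A Let_def) (auto simp: MM_def rendm_def)
qed

lemma tail_run:
  assumes "length x = length y" "\<forall>b\<in>set y. h (c b) = b" "i \<in> {0,3}"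
  shows "acc_from (MM h bb) (map Sym (zip x (map (\<lambda>b. 2 * c b) y)) @ [REnd]) (ev i)
           = (if x = y then (if i = 3 then 1 else 0) else 1/2)"
    "rej_from (MM h bb) (map Sym (zip x (map (\<lambda>b. 2 * c b) y)) @ [REnd]) (ev i)
           = (if x = y then (if i = 0 then 1 else 0) else 1/2)"
  using assms
proof (induction x arbitrary: y)
  case Nil
  { case 1
    then have ii: "i \<in> {0,3}" by simp
    show ?case using 1 step_R[OF ii, of h bb] by (auto simp del: acc_from.simps rej_from.simps) }
  { case 2
    then have ii: "i \<in> {0,3}" by simp
    show ?case using 2 step_R[OF ii, of h bb] by (auto simp del: acc_from.simps rej_from.simps) }
next
  case (Cons a xs)
  { case 1
    then obtain b ys where y: "y = b # ys" by (cases y) auto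
    have hb: "h ((2 * c b) div 2) = b" using 1 y by simp
    show ?case
    proof (cases "a = b")
      case True
      then show ?thesis using 1 y hb Cons.IH(1)[of ys] step_match(1)[of i h "2 * c b" a bb] by (auto simp del: acc_from.simps rej_from.simps)
    next
      case False
      then show ?thesis using 1 y hb step_mis(1)[of i h "2 * c b" a bb] by (auto simp del: acc_from.simps rej_from.simps)
    qed }
  { case 2
    then obtain b ys where y: "y = b # ys" by (cases y) auto
    have hb: "h ((2 * c b) div 2) = b" using 2 y by simp
    show ?case
    proof (cases "a = b")
      case True
      then show ?thesis using 2 y hb Cons.IH(2)[of ys] step_match(2)[of i h "2 * c b" a bb] by (auto simp del: acc_from.simps rej_from.simps)
    next
      case False
      then show ?thesis using 2 y hb step_mis(2)[of i h "2 * c b" a bb] by (auto simp del: acc_from.simps rej_from.simps)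
    qed }
qed

definition advf :: "('a \<Rightarrow> nat) \<Rightarrow> 'a list set \<Rightarrow> 'a list \<Rightarrow> nat list" where
  "advf c L y = (case y of [] \<Rightarrow> []
     | b # ys \<Rightarrow> (2 * c b + (if (y \<in> L) \<noteq> ([] \<in> L) then 1 else 0)) # map (\<lambda>b. 2 * c b) ys)"

lemma full_run:
  assumes "length x = length y" "\<forall>b\<in>set y. h (c b) = b"
  shows "acc_prob (MM h ([] \<in> L)) (two_track x (advf c L y))
           = (if x = y then (if x \<in> L then 1 else 0) else 1/2)"
    "rej_prob (MM h ([] \<in> L)) (two_track x (advf c L y))
           = (if x = y then (if x \<in> L then 0 else 1) else 1/2)"
proof -
  let ?M = "MM h ([] \<in> L)"
  define i0 where "i0 = (if [] \<in> L then 3 else 0 :: nat)"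
  have iv: "init_vec ?M = ev i0" unfolding init_vec_def ev_def i0_def by (auto simp del: acc_from.simps rej_from.simps)
  have i0: "i0 \<in> {0,3}" unfolding i0_def by (auto simp del: acc_from.simps rej_from.simps)
  have "acc_prob ?M (two_track x (advf c L y)) = (if x = y then (if x \<in> L then 1 else 0) else 1/2)
     \<and> rej_prob ?M (two_track x (advf c L y)) = (if x = y then (if x \<in> L then 0 else 1) else 1/2)"
  proof (cases y)
    case Nil
    then have "x = []" using assms by (auto simp del: acc_from.simps rej_from.simps)
    then show ?thesis using Nil i0 unfolding acc_prob_def rej_prob_def two_track_def advf_def iv
      by (simp del: acc_from.simps rej_from.simps add: step_L step_R) (auto simp del: acc_from.simps rej_from.simps simp: i0_def step_R)
  next
    case (Cons b ys)
    then obtain a xs where x: "x = a # xs" using assms by (cases x) auto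
    define f where "f = ((y \<in> L) \<noteq> ([] \<in> L))"
    define g where "g = 2 * c b + (if f then 1 else 0)"
    have adv: "advf c L y = g # map (\<lambda>b. 2 * c b) ys"
      unfolding advf_def g_def f_def Cons by simp
    have gd: "h (g div 2) = b" "odd g = f" using assms Cons unfolding g_def by (auto simp del: acc_from.simps rej_from.simps)
    define i1 where "i1 = (if odd g then 3 - i0 else i0)"
    have i1: "i1 \<in> {0,3}" using i0 unfolding i1_def by (auto simp del: acc_from.simps rej_from.simps)
    have len: "length xs = length ys" using assms x Cons by simp
    have hy: "\<forall>b\<in>set ys. h (c b) = b" using assms Cons by simp
    have i1e: "(i1 = 3) = (y \<in> L)" "(i1 = 0) = (y \<notin> L)"
      unfolding i1_def gd f_def i0_def by (auto simp del: acc_from.simps rej_from.simps)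
    show ?thesis
    proof (cases "a = b")
      case True
      show ?thesis unfolding acc_prob_def rej_prob_def two_track_def adv iv x
        using step_L[OF i0, of h "[] \<in> L"] step_match[of i0 h g a "[] \<in> L", OF i0 gd(1)[folded True]]
          tail_run[OF len hy i1, of "[] \<in> L"] i1e True Cons x
        by (simp del: acc_from.simps rej_from.simps add: i1_def)
    next
      case False
      have ne: "h (g div 2) \<noteq> a" using gd False by simp
      show ?thesis unfolding acc_prob_def rej_prob_def two_track_def adv iv x
        using step_L[OF i0, of h "[] \<in> L"] step_mis[of i0 h g a "[] \<in> L", OF i0 ne] False Cons x
        by (simp del: acc_from.simps rej_from.simps)
    qed
  qed
  then show "acc_prob (MM h ([] \<in> L)) (two_track x (advf c L y))
           = (if x = y then (if x \<in> L then 1 else 0) else 1/2)"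
    "rej_prob (MM h ([] \<in> L)) (two_track x (advf c L y))
           = (if x = y then (if x \<in> L then 0 else 1) else 1/2)" by (auto simp del: acc_from.simps rej_from.simps)
qed

lemma trans_MM: "qfa.trans (MM h b) = mtr h" by (simp add: MM_def)

lemma wf_MM: "wf_qfa A (MM h b)"
proof -
  have "unitary_mat 4 (mtr h s)" for s
  proof (cases s)
    case (Sym p) then show ?thesis
      by (cases p) (auto simp: mtr_def u_idm u_swm u_mism)
  qed (auto simp: mtr_def u_idm u_rendm)
  then show ?thesis unfolding wf_qfa_def trans_MM by simp
qed

lemma avg_lemma:
  fixes S :: "'b set" and f :: "'b \<Rightarrow> real"
  assumes "finite S" "x \<in> S" "\<And>y. y \<in> S \<Longrightarrow> f y = (if y = x then 1 else 1/2)"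
  shows "sum f S / card S > 1/2"
proof -
  have cp: "card S > 0" using assms card_gt_0_iff by blast
  have s1: "sum f S = f x + sum f (S - {x})" using assms by (simp add: sum.remove)
  have s2: "sum f (S - {x}) = sum (\<lambda>_. 1/2) (S - {x})" using assms by (intro sum.cong) auto
  have s3: "f x = 1" using assms by simp
  have s4: "sum (\<lambda>_. 1/2::real) (S - {x}) = (real (card S) - 1) / 2"
    using assms cp by (simp add: card_Diff_singleton of_nat_diff Suc_leI)
  have e: "sum f S = 1 + (real (card S) - 1) / 2" using s1 s2 s3 s4 by simp
  show ?thesis using cp unfolding e by (simp add: field_simps)
qed

theorem lemma5p1:
  fixes \<Sigma> :: "'a set"
  assumes "finite \<Sigma>" and "\<Sigma> \<noteq> {}"
  shows "{L. L \<subseteq> lists \<Sigma> \<and> in_1QFA_Rn (\<lambda>_. 1/2) (\<lambda>_. 1/2) \<Sigma> L} = Pow (lists \<Sigma>)"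
proof -
  obtain h where h: "bij_betw h {0..<card \<Sigma>} \<Sigma>" using ex_bij_betw_nat_finite assms(1) by blast
  define c where "c = inv_into {0..<card \<Sigma>} h"
  have hc: "h (c b) = b" if "b \<in> \<Sigma>" for b
    unfolding c_def using h that by (simp add: bij_betw_inv_into_right)
  have cl: "c b < card \<Sigma>" if "b \<in> \<Sigma>" for b
    unfolding c_def using h that bij_betw_inv_into[OF h] bij_betwE by fastforce
  have cpos: "card \<Sigma> > 0" using assms card_gt_0_iff by blast
  have "in_1QFA_Rn (\<lambda>_. 1/2) (\<lambda>_. 1/2) \<Sigma> L" if L: "L \<subseteq> lists \<Sigma>" for L
  proof -
    define S where "S n = {y. set y \<subseteq> \<Sigma> \<and> length y = n}" for n
    have Sfin: "finite (S n)" for n unfolding S_def using finite_lists_length_eq[OF assms(1)] by simp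
    obtain a0 where a0: "a0 \<in> \<Sigma>" using assms by auto
    have Sne: "S n \<noteq> {}" for n unfolding S_def using a0 by (auto intro!: exI[of _ "replicate n a0"])
    define D where "D n = map_pmf (advf c L) (pmf_of_set (S n))" for n
    define \<Gamma> where "\<Gamma> = {..<2 * card \<Sigma>}"
    let ?M = "MM h ([] \<in> L)"
    have supp: "set_pmf (D n) \<subseteq> {y. length y = n \<and> set y \<subseteq> \<Gamma>}" for n
    proof
      fix z assume "z \<in> set_pmf (D n)"
      then obtain y where y: "y \<in> S n" "z = advf c L y"
        unfolding D_def using Sfin Sne by auto
      then show "z \<in> {y. length y = n \<and> set y \<subseteq> \<Gamma>}"
        unfolding S_def advf_def \<Gamma>_def using cl
        by (cases y) (auto, fastforce+)
    qed
    have main: "(x \<in> L \<longrightarrow> measure_pmf.expectation (D n) (\<lambda>y. acc_prob ?M (two_track x y)) > 1/2) \<and>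
          (x \<notin> L \<longrightarrow> measure_pmf.expectation (D n) (\<lambda>y. rej_prob ?M (two_track x y)) > 1/2)"
      if x: "x \<in> lists \<Sigma>" "length x = n" for x n
    proof -
      have xS: "x \<in> S n" using x unfolding S_def by auto
      have run: "length x = length y \<and> (\<forall>b\<in>set y. h (c b) = b)" if "y \<in> S n" for y
        using that x hc unfolding S_def by auto
      have fr: "acc_prob ?M (two_track x (advf c L y)) = (if x = y then (if x \<in> L then 1 else 0) else 1/2)"
        "rej_prob ?M (two_track x (advf c L y)) = (if x = y then (if x \<in> L then 0 else 1) else 1/2)"
        if "y \<in> S n" for y
        using run[OF that] full_run by blast+
      show ?thesis
      proof (intro conjI impI)
        assume xL: "x \<in> L"
        show "measure_pmf.expectation (D n) (\<lambda>y. acc_prob ?M (two_track x y)) > 1/2"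
          unfolding D_def integral_map_pmf integral_pmf_of_set[OF Sne Sfin]
          by (rule avg_lemma[OF Sfin xS]) (use fr(1) xL in auto)
      next
        assume xL: "x \<notin> L"
        show "measure_pmf.expectation (D n) (\<lambda>y. rej_prob ?M (two_track x y)) > 1/2"
          unfolding D_def integral_map_pmf integral_pmf_of_set[OF Sne Sfin]
          by (rule avg_lemma[OF Sfin xS]) (use fr(2) xL in auto)
      qed
    qed
    have G: "finite \<Gamma>" "\<Gamma> \<noteq> {}" unfolding \<Gamma>_def using cpos by (auto simp: lessThan_empty_iff)
    show ?thesis unfolding in_1QFA_Rn_def
      apply (rule exI[of _ ?M], rule exI[of _ \<Gamma>], rule exI[of _ D])
      apply (intro conjI G wf_MM allI impI supp)
      using main by blast+
  qed
  then show ?thesis by auto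
qed

end
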